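(* Let $p$ be a prime and $G$ a $p$-group of order $p^m$ with $|G/Z(G)|=p^2$. Then $$B_G(t)=\frac{1-p^{m-3}t}{(1-p^{m-2}t)(1-p^{m-1}t)}.$$
   Context: For a finite group $G$ and $n\ge0$, let $G^{(n)}=\{(x_1,\dots,x_n)\in G^n: x_ix_j=x_jx_i\ \forall i,j\}$, on which $G$ acts by simultaneous conjugation; let $\beta_{G,n}$ be the number of orbits and $B_G(t)=\sum_{n\ge0}\beta_{G,n}t^n$, viewed as a rational function of $t$. *)

theory Defs
  imports "HOL-Algebra.Coset" "HOL-Computational_Algebra.Formal_Power_Series"
begin

definition grp_center :: "('a, 'b) monoid_scheme \<Rightarrow> 'a set" where
  "grp_center G = {z \<in> carrier G. \<forall>g \<in> carrier G. z \<otimes>\<^bsub>G\<^esub> g = g \<otimes>\<^bsub>G\<^esub> z}"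

definition commuting_tuples :: "('a, 'b) monoid_scheme \<Rightarrow> nat \<Rightarrow> 'a list set" where
  "commuting_tuples G n = {xs. length xs = n \<and> set xs \<subseteq> carrier G \<and>
     (\<forall>i<n. \<forall>j<n. xs ! i \<otimes>\<^bsub>G\<^esub> xs ! j = xs ! j \<otimes>\<^bsub>G\<^esub> xs ! i)}"

definition conj_orbit :: "('a, 'b) monoid_scheme \<Rightarrow> 'a list \<Rightarrow> 'a list set" where
  "conj_orbit G xs = {map (\<lambda>x. g \<otimes>\<^bsub>G\<^esub> x \<otimes>\<^bsub>G\<^esub> inv\<^bsub>G\<^esub> g) xs | g. g \<in> carrier G}"

definition beta :: "('a, 'b) monoid_scheme \<Rightarrow> nat \<Rightarrow> nat" where
  "beta G n = card (conj_orbit G ` commuting_tuples G n)"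

definition B_series :: "('a, 'b) monoid_scheme \<Rightarrow> rat fps" where
  "B_series G = Abs_fps (\<lambda>n. of_nat (beta G n))"

end

theory Submission
  imports Defs
begin

unbundle fps_syntax

lemma geom_fps:
  fixes c :: rat
  shows "Abs_fps (\<lambda>n. c ^ n) * (1 - fps_const c * fps_X) = 1"
proof (rule fps_ext)
  fix n
  have e: "Abs_fps (\<lambda>n. c ^ n) * (1 - fps_const c * fps_X) =
     Abs_fps (\<lambda>n. c ^ n) - fps_const c * (fps_X * Abs_fps (\<lambda>n. c ^ n))"
    by (simp add: algebra_simps)
  show "(Abs_fps (\<lambda>n. c ^ n) * (1 - fps_const c * fps_X)) $ n = (1 :: rat fps) $ n"
    unfolding e by (cases n) auto
qed

lemma fps_part:
  fixes P Z A :: rat and b :: "nat \<Rightarrow> rat"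
  assumes P: "P \<noteq> 0" and A: "A = P * Z" and b: "\<And>n. b n = ((P+1) * A^n - Z^n) / P"
  shows "Abs_fps b = (1 - fps_const (Z/P) * fps_X) / ((1 - fps_const Z * fps_X) * (1 - fps_const A * fps_X))"
proof -
  define gA where "gA = Abs_fps (\<lambda>n. A ^ n)"
  define gZ where "gZ = Abs_fps (\<lambda>n. Z ^ n)"
  have hA: "gA * (1 - fps_const A * fps_X) = 1" unfolding gA_def by (rule geom_fps)
  have hZ: "gZ * (1 - fps_const Z * fps_X) = 1" unfolding gZ_def by (rule geom_fps)
  have B: "Abs_fps b = fps_const ((P+1)/P) * gA - fps_const (1/P) * gZ"
    by (rule fps_ext) (simp add: gA_def gZ_def b diff_divide_distrib)
  define D where "D = (1 - fps_const Z * fps_X) * (1 - fps_const A * fps_X)"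
  have "Abs_fps b * D = fps_const ((P+1)/P) * (gA * (1 - fps_const A * fps_X)) * (1 - fps_const Z * fps_X)
        - fps_const (1/P) * (gZ * (1 - fps_const Z * fps_X)) * (1 - fps_const A * fps_X)"
    unfolding B D_def by (simp add: algebra_simps)
  also have "\<dots> = fps_const ((P+1)/P) * (1 - fps_const Z * fps_X) - fps_const (1/P) * (1 - fps_const A * fps_X)"
    by (simp add: hA hZ)
  also have "\<dots> = 1 - fps_const (Z/P) * fps_X"
    using P by (intro fps_ext) (simp add: A field_simps)
  finally have BD: "Abs_fps b * D = 1 - fps_const (Z/P) * fps_X" .
  have D0: "D $ 0 \<noteq> 0" unfolding D_def by simp
  have "(1 - fps_const (Z/P) * fps_X) / D = Abs_fps b * D * inverse D"
    using D0 BD by (simp add: fps_divide_unit)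
  also have "\<dots> = Abs_fps b" using inverse_mult_eq_1'[OF D0] by (simp add: mult.assoc)
  finally show ?thesis unfolding D_def by simp
qed
locale ctx = group G for G (structure) +
  fixes p m :: nat
  assumes pr: "prime p" and fin: "finite (carrier G)"
    and cardG: "card (carrier G) = p ^ m"
    and cardQ: "card (rcosets (grp_center G)) = p ^ 2"
begin

abbreviation "Zc \<equiv> grp_center G"

definition Cent :: "'a \<Rightarrow> 'a set" where
  "Cent x = {g \<in> carrier G. g \<otimes> x = x \<otimes> g}"

lemma p_gt1: "p > 1" using pr prime_gt_1_nat by blast

lemma cl1: "x \<in> carrier G \<Longrightarrow> y \<in> carrier G \<Longrightarrow> inv x \<otimes> (x \<otimes> y) = y"
  by (simp add: m_assoc[symmetric])

lemma comm_inv: assumes a: "a \<in> carrier G" and b: "b \<in> carrier G" and ab: "a \<otimes> b = b \<otimes> a"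
  shows "inv a \<otimes> b = b \<otimes> inv a"
proof -
  have "inv a \<otimes> b = inv a \<otimes> (b \<otimes> a) \<otimes> inv a" using a b by (simp add: m_assoc)
  also have "\<dots> = inv a \<otimes> (a \<otimes> b) \<otimes> inv a" by (simp only: ab)
  also have "\<dots> = b \<otimes> inv a" using a b by (simp add: cl1)
  finally show ?thesis .
qed

lemma comm_mult: assumes a: "a \<in> carrier G" and b: "b \<in> carrier G" and g: "g \<in> carrier G"
  and ag: "a \<otimes> g = g \<otimes> a" and bg: "b \<otimes> g = g \<otimes> b"
  shows "a \<otimes> b \<otimes> g = g \<otimes> (a \<otimes> b)"
proof -
  have "a \<otimes> b \<otimes> g = a \<otimes> (b \<otimes> g)" using a b g by (simp add: m_assoc)
  also have "\<dots> = a \<otimes> (g \<otimes> b)" by (simp only: bg)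
  also have "\<dots> = (a \<otimes> g) \<otimes> b" using a b g by (simp add: m_assoc)
  also have "\<dots> = (g \<otimes> a) \<otimes> b" by (simp only: ag)
  also have "\<dots> = g \<otimes> (a \<otimes> b)" using a b g by (simp add: m_assoc)
  finally show ?thesis .
qed

lemma ZcI: "z \<in> carrier G \<Longrightarrow> (\<And>g. g \<in> carrier G \<Longrightarrow> z \<otimes> g = g \<otimes> z) \<Longrightarrow> z \<in> Zc"
  unfolding grp_center_def by blast
lemma ZcD: "z \<in> Zc \<Longrightarrow> g \<in> carrier G \<Longrightarrow> z \<otimes> g = g \<otimes> z"
  unfolding grp_center_def by blast
lemma Zc_carrier: "Zc \<subseteq> carrier G" unfolding grp_center_def by blast

lemma Z_sub: "subgroup Zc G"
proof
  show "Zc \<subseteq> carrier G" by (rule Zc_carrier)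
  show "\<one> \<in> Zc" by (rule ZcI) auto
next
  fix x y assume x: "x \<in> Zc" and y: "y \<in> Zc"
  have xc: "x \<in> carrier G" and yc: "y \<in> carrier G" using x y Zc_carrier by auto
  show "x \<otimes> y \<in> Zc"
    by (rule ZcI) (auto intro!: comm_mult xc yc ZcD[OF x] ZcD[OF y])
next
  fix x assume x: "x \<in> Zc"
  have xc: "x \<in> carrier G" using x Zc_carrier by auto
  show "inv x \<in> Zc"
    by (rule ZcI) (auto intro!: comm_inv xc ZcD[OF x])
qed

lemma dvd_pow: assumes "d dvd p ^ k" obtains i where "i \<le> k" "d = p ^ i"
  using assms divides_primepow_nat[OF pr] by blast

lemma cardZ: "card Zc = p ^ (m - 2)" and m2: "m \<ge> 2"
proof -
  have "card (rcosets Zc) * card Zc = order G" using lagrange[OF Z_sub] .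
  hence e: "p ^ 2 * card Zc = p ^ m" using cardQ cardG unfolding order_def by simp
  hence "card Zc dvd p ^ m" by (metis dvd_triv_right)
  then obtain i where i: "i \<le> m" "card Zc = p ^ i" by (rule dvd_pow)
  with e have "p ^ (2 + i) = p ^ m" by (metis power_add)
  hence "2 + i = m" using p_gt1 power_inject_exp by blast
  thus "card Zc = p ^ (m - 2)" "m \<ge> 2" using i by auto
qed

lemma sub_card:
  assumes H: "subgroup H G" and ZH: "Zc \<subset> H" and HG: "H \<noteq> carrier G"
  shows "card H = p ^ (m - 1)"
proof -
  interpret HG: group "G\<lparr>carrier := H\<rparr>" using subgroup.subgroup_is_group[OF H] is_group by blast
  have s: "subgroup Zc (G\<lparr>carrier := H\<rparr>)" using subgroup_incl[OF Z_sub H] ZH by auto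
  have "card (rcosets\<^bsub>G\<lparr>carrier := H\<rparr>\<^esub> Zc) * card Zc = card H"
    using HG.lagrange[OF s] unfolding order_def by simp
  hence d1: "card Zc dvd card H" by (metis dvd_triv_right)
  have "card (rcosets H) * card H = order G" using lagrange[OF H] .
  hence "card H dvd p ^ m" using cardG unfolding order_def by (metis dvd_triv_right)
  then obtain i where i: "i \<le> m" "card H = p ^ i" by (rule dvd_pow)
  have Hs: "H \<subseteq> carrier G" using H subgroup.subset by blast
  have finH: "finite H" using Hs fin finite_subset by blast
  have "card Zc < card H" using psubset_card_mono[OF finH ZH] .
  hence "i > m - 2" using i cardZ p_gt1 by (metis not_less power_increasing_iff)
  moreover have "card H \<noteq> card (carrier G)" using HG card_subset_eq[OF fin Hs] by blast
  hence "card H < p ^ m" using card_mono[OF fin Hs] cardG by linarith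
  hence "i < m" using i p_gt1 by (simp add: power_strict_increasing_iff)
  ultimately have "i = m - 1" by linarith
  thus ?thesis using i by simp
qed


lemma Cent_sub: assumes x: "x \<in> carrier G" shows "subgroup (Cent x) G"
proof
  show "Cent x \<subseteq> carrier G" unfolding Cent_def by auto
  show "\<one> \<in> Cent x" using x unfolding Cent_def by auto
next
  fix g h assume g: "g \<in> Cent x" and h: "h \<in> Cent x"
  hence gc: "g \<in> carrier G" and hc: "h \<in> carrier G" and gx: "g \<otimes> x = x \<otimes> g" and hx: "h \<otimes> x = x \<otimes> h"
    unfolding Cent_def by auto
  have "g \<otimes> h \<otimes> x = g \<otimes> (h \<otimes> x)" using gc hc x by (simp add: m_assoc)
  also have "\<dots> = (g \<otimes> x) \<otimes> h" using gc hc x hx by (simp add: m_assoc)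
  also have "\<dots> = x \<otimes> (g \<otimes> h)" using gc hc x gx by (simp add: m_assoc)
  finally show "g \<otimes> h \<in> Cent x" using gc hc unfolding Cent_def by auto
next
  fix g assume g: "g \<in> Cent x"
  hence gc: "g \<in> carrier G" and gx: "g \<otimes> x = x \<otimes> g" unfolding Cent_def by auto
  have "inv g \<otimes> x = x \<otimes> inv g" using gc x gx by (rule comm_inv)
  thus "inv g \<in> Cent x" using gc unfolding Cent_def by auto
qed

lemma Z_Cent: assumes x: "x \<in> carrier G" shows "Zc \<subseteq> Cent x"
  using x ZcD Zc_carrier unfolding Cent_def by blast

lemma x_Cent: assumes x: "x \<in> carrier G" shows "x \<in> Cent x"
  using x unfolding Cent_def by auto

lemma Cent_ne: assumes x: "x \<in> carrier G" and xZ: "x \<notin> Zc" shows "\<not> carrier G \<subseteq> Cent x"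
proof
  assume "carrier G \<subseteq> Cent x"
  hence "\<forall>g\<in>carrier G. x \<otimes> g = g \<otimes> x" unfolding Cent_def by auto
  thus False using xZ x ZcI by blast
qed

lemma card_Cent: assumes x: "x \<in> carrier G" and xZ: "x \<notin> Zc" shows "card (Cent x) = p ^ (m - 1)"
proof (rule sub_card[OF Cent_sub[OF x]])
  show "Zc \<subset> Cent x" using Z_Cent[OF x] x_Cent[OF x] xZ by blast
  show "Cent x \<noteq> carrier G" using Cent_ne[OF x xZ] by auto
qed

lemma Cent_eq: assumes x: "x \<in> carrier G" and xZ: "x \<notin> Zc" and y: "y \<in> Cent x" and yZ: "y \<notin> Zc"
  shows "Cent x = Cent y"
proof -
  have yc: "y \<in> carrier G" using y unfolding Cent_def by auto
  let ?I = "Cent x \<inter> Cent y"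
  have sI: "subgroup ?I G" using subgroups_Inter_pair[OF Cent_sub[OF x] Cent_sub[OF yc]] .
  have xy: "x \<in> Cent y" using y x unfolding Cent_def by auto
  have "Zc \<subset> ?I" using Z_Cent[OF x] Z_Cent[OF yc] x_Cent[OF x] xy xZ by blast
  moreover have "?I \<noteq> carrier G" using Cent_ne[OF x xZ] by auto
  ultimately have cI: "card ?I = p ^ (m - 1)" using sub_card[OF sI] by blast
  have f1: "finite (Cent x)" using fin finite_subset unfolding Cent_def by auto
  have f2: "finite (Cent y)" using fin finite_subset unfolding Cent_def by auto
  have "?I = Cent x" using card_subset_eq[OF f1, of ?I] cI card_Cent[OF x xZ] by auto
  moreover have "?I = Cent y" using card_subset_eq[OF f2, of ?I] cI card_Cent[OF yc yZ] by auto
  ultimately show ?thesis by simp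
qed

lemma Cent_comm: assumes x: "x \<in> carrier G" and xZ: "x \<notin> Zc" and y: "y \<in> Cent x" and w: "w \<in> Cent x"
  shows "y \<otimes> w = w \<otimes> y"
proof (cases "y \<in> Zc")
  case True
  then show ?thesis using w ZcD unfolding Cent_def by blast
next
  case False
  hence "w \<in> Cent y" using Cent_eq[OF x xZ y] w by simp
  thus ?thesis unfolding Cent_def by auto
qed


abbreviation "T n \<equiv> commuting_tuples G n"

definition Ct :: "'a list \<Rightarrow> 'a set" where
  "Ct t = {g \<in> carrier G. \<forall>x\<in>set t. g \<otimes> x = x \<otimes> g}"

definition TZ :: "nat \<Rightarrow> 'a list set" where
  "TZ n = {xs. set xs \<subseteq> Zc \<and> length xs = n}"

lemma T_iff: "xs \<in> T n \<longleftrightarrow> length xs = n \<and> set xs \<subseteq> carrier G \<and> (\<forall>x\<in>set xs. \<forall>y\<in>set xs. x \<otimes> y = y \<otimes> x)"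
  unfolding commuting_tuples_def by (auto simp: in_set_conv_nth) (meson nth_mem)

lemma T_comm: "t \<in> T n \<Longrightarrow> x \<in> set t \<Longrightarrow> y \<in> set t \<Longrightarrow> x \<otimes> y = y \<otimes> x"
  using T_iff by blast
lemma T_carr: "t \<in> T n \<Longrightarrow> set t \<subseteq> carrier G"
  using T_iff by blast
lemma T_len: "t \<in> T n \<Longrightarrow> length t = n"
  using T_iff by blast

lemma fin_T: "finite (T n)"
proof (rule finite_subset[OF _ finite_lists_length_eq[OF fin, of n]])
  show "T n \<subseteq> {xs. set xs \<subseteq> carrier G \<and> length xs = n}" using T_carr T_len by blast
qed

lemma TZ_sub: "TZ n \<subseteq> T n"
proof
  fix xs assume xs: "xs \<in> TZ n"
  hence a: "set xs \<subseteq> Zc" "length xs = n" unfolding TZ_def by auto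
  have c: "set xs \<subseteq> carrier G" using a Zc_carrier by blast
  have "\<forall>x\<in>set xs. \<forall>y\<in>set xs. x \<otimes> y = y \<otimes> x"
  proof (intro ballI)
    fix x y assume "x \<in> set xs" "y \<in> set xs"
    thus "x \<otimes> y = y \<otimes> x" using a c ZcD by blast
  qed
  thus "xs \<in> T n" unfolding T_iff using a c by blast
qed

lemma card_TZ: "card (TZ n) = (p ^ (m - 2)) ^ n"
  unfolding TZ_def using card_lists_length_eq[of Zc n] finite_subset[OF Zc_carrier fin] cardZ by simp

lemma Ct_central: assumes "set t \<subseteq> Zc" shows "Ct t = carrier G"
proof
  show "Ct t \<subseteq> carrier G" unfolding Ct_def by blast
  show "carrier G \<subseteq> Ct t"
  proof
    fix g assume g: "g \<in> carrier G"
    have "\<forall>x\<in>set t. g \<otimes> x = x \<otimes> g"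
    proof
      fix x assume "x \<in> set t"
      hence "x \<in> Zc" using assms by blast
      from ZcD[OF this g] show "g \<otimes> x = x \<otimes> g" by simp
    qed
    thus "g \<in> Ct t" using g unfolding Ct_def by blast
  qed
qed

lemma Ct_card: assumes t: "t \<in> T n" and nz: "\<not> set t \<subseteq> Zc" shows "card (Ct t) = p ^ (m - 1)"
proof -
  obtain x where xt: "x \<in> set t" and xZ: "x \<notin> Zc" using nz by auto
  have x: "x \<in> carrier G" using T_carr[OF t] xt by blast
  have "Ct t = Cent x"
  proof
    show "Ct t \<subseteq> Cent x" using xt unfolding Ct_def Cent_def by blast
    show "Cent x \<subseteq> Ct t"
    proof
      fix g assume g: "g \<in> Cent x"
      have "\<forall>y\<in>set t. g \<otimes> y = y \<otimes> g"
      proof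
        fix y assume yt: "y \<in> set t"
        have "y \<in> carrier G" using T_carr[OF t] yt by blast
        hence "y \<in> Cent x" using T_comm[OF t yt xt] unfolding Cent_def by blast
        thus "g \<otimes> y = y \<otimes> g" using Cent_comm[OF x xZ g] by simp
      qed
      thus "g \<in> Ct t" using g unfolding Ct_def Cent_def by blast
    qed
  qed
  thus ?thesis using card_Cent[OF x xZ] by simp
qed

lemma T_Suc: "T (Suc n) = (\<lambda>(t,g). g # t) ` (SIGMA t:T n. Ct t)"
proof
  show "T (Suc n) \<subseteq> (\<lambda>(t,g). g # t) ` (SIGMA t:T n. Ct t)"
  proof
    fix xs assume xs: "xs \<in> T (Suc n)"
    then obtain g t where e: "xs = g # t" using T_len[OF xs] by (cases xs) auto
    have "length t = n" using T_len[OF xs] e by simp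
    moreover have "set t \<subseteq> carrier G" using T_carr[OF xs] e by simp
    moreover have "\<forall>x\<in>set t. \<forall>y\<in>set t. x \<otimes> y = y \<otimes> x"
      by (intro ballI, rule T_comm[OF xs]) (auto simp: e)
    ultimately have t: "t \<in> T n" unfolding T_iff by blast
    have "g \<in> carrier G" using T_carr[OF xs] e by simp
    moreover have "\<forall>x\<in>set t. g \<otimes> x = x \<otimes> g"
      by (intro ballI, rule T_comm[OF xs]) (auto simp: e)
    ultimately have "g \<in> Ct t" unfolding Ct_def by blast
    thus "xs \<in> (\<lambda>(t,g). g # t) ` (SIGMA t:T n. Ct t)" using e t by force
  qed
  show "(\<lambda>(t,g). g # t) ` (SIGMA t:T n. Ct t) \<subseteq> T (Suc n)"
  proof
    fix xs assume "xs \<in> (\<lambda>(t,g). g # t) ` (SIGMA t:T n. Ct t)"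
    then obtain t g where e: "xs = g # t" and t: "t \<in> T n" and g: "g \<in> Ct t" by auto
    have gc: "g \<in> carrier G" and gx: "\<And>x. x \<in> set t \<Longrightarrow> g \<otimes> x = x \<otimes> g" using g unfolding Ct_def by auto
    have "\<forall>x\<in>set (g # t). \<forall>y\<in>set (g # t). x \<otimes> y = y \<otimes> x"
    proof (intro ballI)
      fix x y assume x: "x \<in> set (g # t)" and y: "y \<in> set (g # t)"
      show "x \<otimes> y = y \<otimes> x"
      proof (cases "x = g")
        case True
        then show ?thesis
        proof (cases "y = g")
          case False
          hence "y \<in> set t" using y by simp
          then show ?thesis using gx True by simp
        qed simp
      next
        case False
        hence xt: "x \<in> set t" using x by simp
        show ?thesis
        proof (cases "y = g")
          case True
          then show ?thesis using gx[OF xt] by simp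
        next
          case False
          hence "y \<in> set t" using y by simp
          then show ?thesis using T_comm[OF t xt] by simp
        qed
      qed
    qed
    moreover have "length (g # t) = Suc n" using T_len[OF t] by simp
    moreover have "set (g # t) \<subseteq> carrier G" using T_carr[OF t] gc by simp
    ultimately show "xs \<in> T (Suc n)" unfolding e T_iff by blast
  qed
qed

lemma card_T_Suc: "card (T (Suc n)) = card (TZ n) * p ^ m + (card (T n) - card (TZ n)) * p ^ (m - 1)"
proof -
  have inj: "inj_on (\<lambda>(t,g). g # t) (SIGMA t:T n. Ct t)" by (auto simp: inj_on_def)
  have finC: "\<forall>t\<in>T n. finite (Ct t)" using fin unfolding Ct_def by auto
  have "card (T (Suc n)) = (\<Sum>t\<in>T n. card (Ct t))"
    unfolding T_Suc card_image[OF inj] using card_SigmaI[OF fin_T finC] by simp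
  also have "\<dots> = (\<Sum>t\<in>TZ n. card (Ct t)) + (\<Sum>t\<in>T n - TZ n. card (Ct t))"
    using sum.subset_diff[OF TZ_sub fin_T] by (metis add.commute)
  also have "(\<Sum>t\<in>TZ n. card (Ct t)) = (\<Sum>t\<in>TZ n. p ^ m)"
    by (rule sum.cong) (auto simp: TZ_def Ct_central cardG)
  also have "(\<Sum>t\<in>T n - TZ n. card (Ct t)) = (\<Sum>t\<in>T n - TZ n. p ^ (m - 1))"
  proof (rule sum.cong)
    fix t assume "t \<in> T n - TZ n"
    hence t: "t \<in> T n" and tz: "t \<notin> TZ n" by auto
    have "length t = n" using t T_iff by blast
    hence "\<not> set t \<subseteq> Zc" using tz unfolding TZ_def by auto
    with t show "card (Ct t) = p ^ (m - 1)" by (rule Ct_card)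
  qed simp
  finally have X: "card (T (Suc n)) = (\<Sum>t\<in>TZ n. p ^ m) + (\<Sum>t\<in>T n - TZ n. p ^ (m - 1))" .
  have "card (T n - TZ n) = card (T n) - card (TZ n)"
    using card_Diff_subset[OF finite_subset[OF TZ_sub fin_T] TZ_sub] .
  with X show ?thesis by simp
qed

lemma T0: "T 0 = {[]}" unfolding commuting_tuples_def by auto

lemma card_T: "int (card (T n)) = (int p + 1) * (int p ^ (m - 1)) ^ n - int p * (int p ^ (m - 2)) ^ n"
proof (induction n)
  case 0
  then show ?case by (simp add: T0)
next
  case (Suc n)
  have le: "card (TZ n) \<le> card (T n)" using card_mono[OF fin_T TZ_sub] .
  have pa: "(int p) ^ m = int p * int p ^ (m - 1)" and pz: "int p ^ (m - 1) = int p * int p ^ (m - 2)"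
  proof -
    have e1: "m = Suc (m - 1)" and e2: "m - 1 = Suc (m - 2)" using m2 by arith+
    show "(int p) ^ m = int p * int p ^ (m - 1)" by (subst e1) simp
    show "int p ^ (m - 1) = int p * int p ^ (m - 2)" by (subst e2) simp
  qed
  have "int (card (T (Suc n))) = int (card (TZ n)) * int p ^ m + (int (card (T n)) - int (card (TZ n))) * int p ^ (m - 1)"
    unfolding card_T_Suc using le by (simp add: of_nat_diff)
  also have "\<dots> = (int p + 1) * (int p ^ (m - 1)) ^ Suc n - int p * (int p ^ (m - 2)) ^ Suc n"
    unfolding Suc.IH card_TZ unfolding pa pz by (simp add: algebra_simps)
  finally show ?case .
qed


definition act :: "'a \<Rightarrow> 'a list \<Rightarrow> 'a list" where
  "act g t = map (\<lambda>x. g \<otimes> x \<otimes> inv g) t"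

lemma orb_eq: "conj_orbit G t = (\<lambda>g. act g t) ` carrier G"
  unfolding conj_orbit_def act_def by auto


lemma conj_mult: "g \<in> carrier G \<Longrightarrow> x \<in> carrier G \<Longrightarrow> y \<in> carrier G \<Longrightarrow>
  (g \<otimes> x \<otimes> inv g) \<otimes> (g \<otimes> y \<otimes> inv g) = g \<otimes> (x \<otimes> y) \<otimes> inv g"
  by (simp add: m_assoc cl1)

lemma act_T: assumes t: "t \<in> T n" and g: "g \<in> carrier G" shows "act g t \<in> T n"
proof -
  have c: "set t \<subseteq> carrier G" using T_carr[OF t] .
  have "\<forall>u\<in>set (act g t). \<forall>v\<in>set (act g t). u \<otimes> v = v \<otimes> u"
  proof (intro ballI)
    fix u v assume "u \<in> set (act g t)" "v \<in> set (act g t)"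
    then obtain x y where x: "x \<in> set t" and y: "y \<in> set t" and u: "u = g \<otimes> x \<otimes> inv g" and v: "v = g \<otimes> y \<otimes> inv g"
      unfolding act_def by auto
    have xc: "x \<in> carrier G" and yc: "y \<in> carrier G" using c x y by auto
    have "u \<otimes> v = g \<otimes> (x \<otimes> y) \<otimes> inv g" unfolding u v using conj_mult[OF g xc yc] .
    also have "\<dots> = g \<otimes> (y \<otimes> x) \<otimes> inv g" using T_comm[OF t x y] by simp
    also have "\<dots> = v \<otimes> u" unfolding u v using conj_mult[OF g yc xc] by simp
    finally show "u \<otimes> v = v \<otimes> u" .
  qed
  moreover have "length (act g t) = n" using T_len[OF t] unfolding act_def by simp
  moreover have "set (act g t) \<subseteq> carrier G" using c g unfolding act_def by auto
  ultimately show ?thesis unfolding T_iff by blast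
qed

lemma act_mult: "a \<in> carrier G \<Longrightarrow> b \<in> carrier G \<Longrightarrow> set t \<subseteq> carrier G \<Longrightarrow> act (a \<otimes> b) t = act a (act b t)"
  unfolding act_def by (auto simp: m_assoc inv_mult_group subset_iff)

lemma act_one: "set t \<subseteq> carrier G \<Longrightarrow> act \<one> t = t"
  unfolding act_def by (induction t) auto

lemma act_carrier: "g \<in> carrier G \<Longrightarrow> set t \<subseteq> carrier G \<Longrightarrow> set (act g t) \<subseteq> carrier G"
  unfolding act_def by auto

lemma orbit_eq: assumes t: "set t \<subseteq> carrier G" and s: "s \<in> conj_orbit G t"
  shows "conj_orbit G s = conj_orbit G t"
proof -
  obtain g where g: "g \<in> carrier G" and sg: "s = act g t" using s unfolding orb_eq by auto
  have "(\<lambda>h. act h s) ` carrier G = (\<lambda>h. act h t) ` carrier G"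
  proof
    show "(\<lambda>h. act h s) ` carrier G \<subseteq> (\<lambda>h. act h t) ` carrier G"
      using g t by (auto simp: sg act_mult[symmetric])
    show "(\<lambda>h. act h t) ` carrier G \<subseteq> (\<lambda>h. act h s) ` carrier G"
    proof
      fix u assume "u \<in> (\<lambda>h. act h t) ` carrier G"
      then obtain h where h: "h \<in> carrier G" and u: "u = act h t" by auto
      have "act (h \<otimes> inv g) s = act ((h \<otimes> inv g) \<otimes> g) t" using h g t by (simp add: sg act_mult)
      also have "(h \<otimes> inv g) \<otimes> g = h" using h g by (simp add: m_assoc)
      finally show "u \<in> (\<lambda>h. act h s) ` carrier G" using u h g by (metis image_eqI inv_closed m_closed)
    qed
  qed
  thus ?thesis unfolding orb_eq .
qed

lemma stab: assumes g: "g \<in> carrier G" and t: "set t \<subseteq> carrier G"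
  shows "act g t = t \<longleftrightarrow> g \<in> Ct t"
proof -
  have e: "g \<otimes> x \<otimes> inv g = x \<longleftrightarrow> g \<otimes> x = x \<otimes> g" if x: "x \<in> carrier G" for x
    using g x by (metis inv_solve_right m_closed inv_closed)
  have "act g t = t \<longleftrightarrow> (\<forall>x\<in>set t. g \<otimes> x \<otimes> inv g = x)"
    unfolding act_def using map_eq_conv[of "\<lambda>x. g \<otimes> x \<otimes> inv g" t "\<lambda>x. x"] by simp
  also have "\<dots> \<longleftrightarrow> (\<forall>x\<in>set t. g \<otimes> x = x \<otimes> g)" using e t by blast
  finally show ?thesis using g unfolding Ct_def by auto
qed

lemma orb_stab: assumes t: "set t \<subseteq> carrier G"
  shows "card (conj_orbit G t) * card (Ct t) = p ^ m"
proof -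
  let ?f = "\<lambda>g. act g t"
  have fo: "finite (conj_orbit G t)" unfolding orb_eq using fin by simp
  have fib: "card {g \<in> carrier G. ?f g = u} = card (Ct t)" if u: "u \<in> conj_orbit G t" for u
  proof -
    obtain g0 where g0: "g0 \<in> carrier G" and ug: "u = act g0 t" using u unfolding orb_eq by auto
    have "{g \<in> carrier G. ?f g = u} = (\<lambda>h. g0 \<otimes> h) ` Ct t"
    proof
      show "(\<lambda>h. g0 \<otimes> h) ` Ct t \<subseteq> {g \<in> carrier G. ?f g = u}"
      proof
        fix g assume "g \<in> (\<lambda>h. g0 \<otimes> h) ` Ct t"
        then obtain h where h: "h \<in> Ct t" and gh: "g = g0 \<otimes> h" by auto
        have hc: "h \<in> carrier G" using h unfolding Ct_def by auto
        have "act h t = t" using stab[OF hc t] h by simp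
        thus "g \<in> {g \<in> carrier G. ?f g = u}" using gh g0 hc t ug by (simp add: act_mult)
      qed
      show "{g \<in> carrier G. ?f g = u} \<subseteq> (\<lambda>h. g0 \<otimes> h) ` Ct t"
      proof
        fix g assume "g \<in> {g \<in> carrier G. ?f g = u}"
        hence g: "g \<in> carrier G" and gu: "act g t = act g0 t" using ug by auto
        let ?h = "inv g0 \<otimes> g"
        have hc: "?h \<in> carrier G" using g g0 by simp
        have "act ?h t = act (inv g0) (act g0 t)" using g g0 t gu by (simp add: act_mult)
        also have "\<dots> = act (inv g0 \<otimes> g0) t" using g0 t by (intro act_mult[symmetric]) auto
        also have "\<dots> = t" using g0 t by (simp add: act_one)
        finally have "?h \<in> Ct t" using stab[OF hc t] by simp
        moreover have "g = g0 \<otimes> ?h" using g g0 by (simp add: m_assoc[symmetric])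
        ultimately show "g \<in> (\<lambda>h. g0 \<otimes> h) ` Ct t" by blast
      qed
    qed
    moreover have "inj_on (\<lambda>h. g0 \<otimes> h) (Ct t)" using g0 unfolding inj_on_def Ct_def by auto
    ultimately show ?thesis by (simp add: card_image)
  qed
  have "(\<Sum>u\<in>conj_orbit G t. card {g \<in> carrier G. ?f g = u}) = (\<Sum>u\<in>conj_orbit G t. \<Sum>_\<in>{g \<in> carrier G. ?f g = u}. (1::nat))"
    by (simp only: card_eq_sum)
  also have "\<dots> = (\<Sum>_\<in>carrier G. (1::nat))" by (rule sum.group[OF fin fo]) (auto simp: orb_eq)
  also have "\<dots> = card (carrier G)" by (simp only: card_eq_sum)
  finally have "card (carrier G) = (\<Sum>u\<in>conj_orbit G t. card {g \<in> carrier G. ?f g = u})" by simp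
  also have "\<dots> = (\<Sum>u\<in>conj_orbit G t. card (Ct t))" using fib by simp
  finally show ?thesis using cardG by simp
qed


lemma orbit_single: assumes t: "t \<in> TZ n" shows "conj_orbit G t = {t}"
proof -
  have tc: "set t \<subseteq> carrier G" using TZ_sub t T_carr by blast
  have tz: "set t \<subseteq> Zc" using t unfolding TZ_def by blast
  have "\<And>g. g \<in> carrier G \<Longrightarrow> act g t = t" using stab[OF _ tc] Ct_central[OF tz] by blast
  thus ?thesis unfolding orb_eq by auto
qed

lemma orbit_in: "t \<in> T n \<Longrightarrow> conj_orbit G t \<subseteq> T n"
  unfolding orb_eq using act_T by blast

lemma self_in_orbit: "set t \<subseteq> carrier G \<Longrightarrow> t \<in> conj_orbit G t"
  unfolding orb_eq using act_one by (metis image_eqI one_closed)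

lemma beta_eq: "int p * int (beta G n) = (int p + 1) * (int p ^ (m - 1)) ^ n - (int p ^ (m - 2)) ^ n"
proof -
  let ?O = "conj_orbit G ` T n"
  let ?OZ = "conj_orbit G ` TZ n"
  let ?ON = "?O - ?OZ"
  have finO: "finite ?O" using fin_T by simp
  have OZsub: "?OZ \<subseteq> ?O" using TZ_sub by blast
  have finoo: "\<And>ob. ob \<in> ?O \<Longrightarrow> finite ob" using fin unfolding orb_eq by auto
  have disj: "pairwise disjnt ?O"
  proof (rule pairwiseI)
    fix o1 o2 assume o1: "o1 \<in> ?O" and o2: "o2 \<in> ?O" and ne: "o1 \<noteq> o2"
    obtain t1 where t1: "t1 \<in> T n" "o1 = conj_orbit G t1" using o1 by blast
    obtain t2 where t2: "t2 \<in> T n" "o2 = conj_orbit G t2" using o2 by blast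
    show "disjnt o1 o2"
    proof (rule ccontr)
      assume "\<not> disjnt o1 o2"
      then obtain s where s1: "s \<in> o1" and s2: "s \<in> o2" unfolding disjnt_def by blast
      have "conj_orbit G s = o1" using orbit_eq[OF T_carr[OF t1(1)]] s1 t1(2) by simp
      moreover have "conj_orbit G s = o2" using orbit_eq[OF T_carr[OF t2(1)]] s2 t2(2) by simp
      ultimately show False using ne by simp
    qed
  qed
  have U: "\<Union>?O = T n"
  proof
    show "\<Union>?O \<subseteq> T n" using orbit_in by blast
    show "T n \<subseteq> \<Union>?O" using self_in_orbit T_carr by blast
  qed
  have cT: "card (T n) = sum card ?O" using card_Union_disjoint[OF disj finoo] U by simp
  have OZe: "?OZ = (\<lambda>t. {t}) ` TZ n" using orbit_single by auto
  have cOZ: "card ?OZ = card (TZ n)" unfolding OZe by (rule card_image) (auto simp: inj_on_def)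
  have sOZ: "sum card ?OZ = card ?OZ"
  proof -
    have "sum card ((\<lambda>t. {t}) ` TZ n) = sum (\<lambda>t. card {t}) (TZ n)"
      by (subst sum.reindex) (auto simp: inj_on_def)
    also have "\<dots> = card (TZ n)" by simp
    finally show ?thesis using cOZ OZe by simp
  qed
  have sON: "sum card ?ON = p * card ?ON"
  proof -
    have "sum card ?ON = sum (\<lambda>_. p) ?ON"
    proof (rule sum.cong)
      fix ob assume ob: "ob \<in> ?ON"
      then obtain t where t: "t \<in> T n" and ot: "ob = conj_orbit G t" and ntz: "t \<notin> TZ n" by blast
      have "\<not> set t \<subseteq> Zc" using ntz T_len[OF t] unfolding TZ_def by blast
      hence "card (Ct t) = p ^ (m - 1)" using Ct_card[OF t] by blast
      hence e: "card ob * p ^ (m - 1) = p * p ^ (m - 1)" using orb_stab[OF T_carr[OF t]] ot m2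
        by (metis Suc_diff_le Suc_diff_Suc diff_Suc_1 le_trans one_le_numeral power_Suc numeral_2_eq_2 Suc_leD)
      have "p ^ (m - 1) > 0" using p_gt1 by simp
      thus "card ob = p" using e p_gt1 by simp
    qed simp
    thus ?thesis by simp
  qed
  have "sum card ?O = sum card ?OZ + sum card ?ON"
    using sum.subset_diff[OF OZsub finO] by (metis add.commute)
  hence A: "card (T n) = card (TZ n) + p * card ?ON" using cT sOZ sON cOZ by simp
  have "card ?O = card ?OZ + card ?ON"
    using card_Diff_subset[OF finite_subset[OF OZsub finO] OZsub] card_mono[OF finO OZsub] by simp
  hence B: "beta G n = card (TZ n) + card ?ON" unfolding beta_def using cOZ by simp
  have "int p * int (beta G n) = int p * int (card (TZ n)) + int (card (T n)) - int (card (TZ n))"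
    unfolding B using A by (simp add: algebra_simps)
  also have "\<dots> = (int p + 1) * (int p ^ (m - 1)) ^ n - (int p ^ (m - 2)) ^ n"
    unfolding card_T card_TZ by (simp add: algebra_simps)
  finally show ?thesis .
qed

lemma m3: "m \<ge> 3"
proof (rule ccontr)
  assume "\<not> m \<ge> 3"
  hence m: "m = 2" using m2 by simp
  have "int p * int (beta G 1) = (int p + 1) * int p - 1" using beta_eq[of 1] m by simp
  hence "int p * (int (beta G 1) - int p - 1) = - 1" by (simp add: algebra_simps)
  hence "int p dvd - 1" by (metis dvd_triv_left)
  hence "int p dvd 1" by simp
  hence "int p \<le> 1" by (rule zdvd_imp_le) simp
  thus False using p_gt1 by simp
qed

end

theorem theorem8p2:
  fixes G :: "('a, 'b) monoid_scheme" and p m :: nat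
  assumes "group G" and "prime p" and "finite (carrier G)"
    and "card (carrier G) = p ^ m"
    and "card (rcosets\<^bsub>G\<^esub> (grp_center G)) = p ^ 2"
  shows "B_series G =
    (1 - fps_const (of_nat (p ^ (m - 3))) * fps_X) /
    ((1 - fps_const (of_nat (p ^ (m - 2))) * fps_X) * (1 - fps_const (of_nat (p ^ (m - 1))) * fps_X))"
proof -
  interpret C: ctx G p m using assms by (simp add: ctx_def ctx_axioms_def)
  have m3: "m \<ge> 3" by (rule C.m3)
  define P :: rat where "P = of_nat p"
  define Z :: rat where "Z = of_nat (p ^ (m - 2))"
  define A :: rat where "A = of_nat (p ^ (m - 1))"
  have P0: "P \<noteq> 0" unfolding P_def using C.p_gt1 by simp
  have e1: "m - 1 = Suc (m - 2)" and e2: "m - 2 = Suc (m - 3)" using m3 by arith+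
  have AZ: "A = P * Z" unfolding A_def Z_def P_def by (subst e1) simp
  have ZP: "Z / P = of_nat (p ^ (m - 3))" unfolding Z_def P_def using P0 P_def by (subst e2) simp
  have b: "of_nat (beta G n) = ((P+1) * A^n - Z^n) / P" for n
  proof -
    have "(of_int (int p * int (beta G n)) :: rat) = of_int ((int p + 1) * (int p ^ (m - 1)) ^ n - (int p ^ (m - 2)) ^ n)"
      using C.beta_eq[of n] by simp
    hence "P * of_nat (beta G n) = (P+1) * A^n - Z^n" unfolding P_def A_def Z_def by simp
    thus ?thesis using P0 by (simp add: field_simps)
  qed
  have "B_series G = Abs_fps (\<lambda>n. of_nat (beta G n))" unfolding B_series_def by simp
  also have "\<dots> = (1 - fps_const (Z/P) * fps_X) / ((1 - fps_const Z * fps_X) * (1 - fps_const A * fps_X))"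
    by (rule fps_part[OF P0 AZ b])
  finally show ?thesis unfolding ZP unfolding Z_def A_def .
qed

end
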